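(* Let $G=\theta_{d_1,\dots,d_\ell}$ be a generalized theta graph with $\ell\ge1$ paths and $d_i\ge1$ for all $i$. Then Broadcast is solvable on $G$ with $k$ ignorant agents for every $k\ge \ell$ (with $k+1$ not exceeding the number of nodes of $G$).
   Context: Generalized theta graph: $\theta_{d_1,\dots,d_\ell}$ consists of two distinct fixed nodes $N,S$ (the poles) joined by $\ell$ internally vertex-disjoint paths, the $i$-th of which has exactly $d_i\ge 1$ internal nodes. Broadcast model: a connected base graph $G=(V,E)$ with $n$ nodes. There is one source agent holding a message $\mathcal M$ and $k\ge1$ ignorant agents (agents not holding $\mathcal M$); initially all agents occupy pairwise distinct nodes, the initial placement being chosen by the adversary. Time proceeds in synchronous rounds; in each round: (1) the adversary removes a (possibly empty) set $E'\subseteq E$ of edges such that $(V,E\setminus E')$ is connected; (2) each agent (agents have unique IDs, local memory, and see the entire current graph, the positions of all agents and which agents hold $\mathcal M$) chooses either to stay or to traverse an edge of $E\setminus E'$ incident to its current node; (3) agents move. Whenever an ignorant agent is at the same node as an agent holding $\mathcal M$, it receives $\mathcal M$ and becomes a source agent. The adversary is adaptive and knows the agents' strategy. Broadcast is solvable on $G$ with $k$ ignorant agents if the agents have a strategy such that, for every initial placement and every adversary behaviour, after finitely many rounds all agents hold $\mathcal M$; otherwise the adversary is said to have a winning strategy. *)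

theory Defs
  imports Main
begin

definition graph_connected :: "'v set \<Rightarrow> 'v set set \<Rightarrow> bool" where
  "graph_connected V E \<longleftrightarrow>
     (\<forall>u\<in>V. \<forall>v\<in>V. (u, v) \<in> {(x, y). {x, y} \<in> E}\<^sup>*)"

datatype tnode = North | South | Inner nat nat

definition theta_V :: "nat \<Rightarrow> (nat \<Rightarrow> nat) \<Rightarrow> tnode set" where
  "theta_V l d = {North, South} \<union> {Inner i j | i j. i < l \<and> j < d i}"

definition theta_E :: "nat \<Rightarrow> (nat \<Rightarrow> nat) \<Rightarrow> tnode set set" where
  "theta_E l d =
     {{North, Inner i 0} | i. i < l}
   \<union> {{Inner i j, Inner i (Suc j)} | i j. i < l \<and> Suc j < d i}
   \<union> {{Inner i (d i - 1), South} | i. i < l}"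

text \<open>Agents are 0..k (k+1 agents); s is the ID of the source agent.
  A (full-information) strategy sigma maps the initial placement p0, the
  source ID s and the list of edge sets removed by the adversary so far
  (including the current round) to the new positions of all agents. Since all
  agents see everything and the game is deterministic, this history determines
  the whole past play.\<close>

type_synonym 'v strategy = "(nat \<Rightarrow> 'v) \<Rightarrow> nat \<Rightarrow> 'v set set list \<Rightarrow> (nat \<Rightarrow> 'v)"

fun bc_run :: "nat \<Rightarrow> 'v strategy \<Rightarrow> (nat \<Rightarrow> 'v) \<Rightarrow> nat \<Rightarrow> (nat \<Rightarrow> 'v set set)
               \<Rightarrow> nat \<Rightarrow> (nat \<Rightarrow> 'v) \<times> nat set" where
  "bc_run k \<sigma> p0 s R 0 = (p0, {s})"
| "bc_run k \<sigma> p0 s R (Suc t) =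
     (let (p, I) = bc_run k \<sigma> p0 s R t;
          p' = \<sigma> p0 s (map R [0..<Suc t])
      in (p', I \<union> {a. a \<le> k \<and> (\<exists>b\<in>I. b \<le> k \<and> p' a = p' b)}))"

definition broadcast_solvable :: "'v set \<Rightarrow> 'v set set \<Rightarrow> nat \<Rightarrow> bool" where
  "broadcast_solvable V E k \<longleftrightarrow>
     (\<exists>\<sigma> :: 'v strategy.
       \<forall>p0 s R.
         inj_on p0 {..k} \<and> p0 ` {..k} \<subseteq> V \<and> s \<le> k \<and>
         (\<forall>t. R t \<subseteq> E \<and> graph_connected V (E - R t))
         \<longrightarrow>
         (\<forall>t. \<forall>a\<le>k.
             let p = fst (bc_run k \<sigma> p0 s R t);
                 p' = fst (bc_run k \<sigma> p0 s R (Suc t))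
             in p' a = p a \<or> {p a, p' a} \<in> E - R t)
         \<and> (\<exists>t. {..k} \<subseteq> snd (bc_run k \<sigma> p0 s R t)))"

end

theory Submission
  imports Defs
begin

definition edge :: "(nat \<Rightarrow> nat) \<Rightarrow> nat \<Rightarrow> nat \<Rightarrow> tnode set" where
  "edge d q i = (if i = 0 then {North, Inner q 0} else if i < d q then {Inner q (i-1), Inner q i}
     else {Inner q (d q - 1), South})"

lemma edge_in_E:
  assumes "q < l" "i \<le> d q" "d q \<ge> 1"
  shows "edge d q i \<in> theta_E l d"
proof -
  consider "i = 0" | "0 < i" "i < d q" | "i = d q" "i > 0" using assms by linarith
  then show ?thesis
  proof cases
    case 1
    then have "edge d q i = {North, Inner q 0}" unfolding edge_def by simp
    then show ?thesis using assms unfolding theta_E_def by blast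
  next
    case 2
    then have "edge d q i = {Inner q (i-1), Inner q (Suc (i-1))}" unfolding edge_def by simp
    moreover have "Suc (i-1) < d q" using 2 by simp
    ultimately show ?thesis using assms unfolding theta_E_def by blast
  next
    case 3
    then have "edge d q i = {Inner q (d q - 1), South}" unfolding edge_def by simp
    then show ?thesis using assms unfolding theta_E_def by blast
  qed
qed

lemma closed_reach:
  assumes "(u, v) \<in> {(x, y). {x, y} \<in> F}\<^sup>*" "u \<in> X"
    "\<And>x y. {x, y} \<in> F \<Longrightarrow> x \<in> X \<Longrightarrow> y \<in> X"
  shows "v \<in> X"
  using assms(1,2)
proof (induction rule: rtrancl_induct)
  case base then show ?case .
next
  case (step y z) then show ?case using assms(3) by auto
qed

lemma edge_0[simp]: "edge d q 0 = {North, Inner q 0}"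
  by (simp add: edge_def)
lemma edge_Suc: "Suc j < d q \<Longrightarrow> edge d q (Suc j) = {Inner q j, Inner q (Suc j)}"
  by (simp add: edge_def)
lemma edge_last: "0 < d q \<Longrightarrow> edge d q (d q) = {Inner q (d q - 1), South}"
  by (simp add: edge_def)

lemma E_cases:
  assumes "{x,y} \<in> theta_E l d"
  obtains (a) q0 where "{x,y} = {North, Inner q0 0}" "q0 < l"
    | (b) q0 j0 where "{x,y} = {Inner q0 j0, Inner q0 (Suc j0)}" "q0 < l" "Suc j0 < d q0"
    | (c) q0 where "{x,y} = {Inner q0 (d q0 - 1), South}" "q0 < l"
  using assms unfolding theta_E_def by blast

lemma dbl1: "{Inner q j, y} = {North, Inner q0 0} \<Longrightarrow> q0 = q \<and> j = 0 \<and> y = North"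
  by (auto simp: doubleton_eq_iff)
lemma dbl2: "{Inner q j, y} = {Inner q0 j0, Inner q0 (Suc j0)} \<Longrightarrow> q0 = q \<and> ((j0 = j \<and> y = Inner q (Suc j)) \<or> (Suc j0 = j \<and> y = Inner q j0))"
  by (auto simp: doubleton_eq_iff)
lemma dbl3: "{Inner q j, y} = {Inner q0 (d q0 - 1), South} \<Longrightarrow> q0 = q \<and> j = d q - 1 \<and> y = South"
  by (auto simp: doubleton_eq_iff)
lemma dbl4: "{North, y} = {Inner q0 j0, Inner q0 (Suc j0)} \<Longrightarrow> False"
  by (auto simp: doubleton_eq_iff)
lemma dbl5: "{North, y} = {Inner q0 (d q0 - 1), South} \<Longrightarrow> False"
  by (auto simp: doubleton_eq_iff)
lemma dbl6: "{North, y} = {North, Inner q0 0} \<Longrightarrow> y = Inner q0 0"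
  by (auto simp: doubleton_eq_iff)

lemma cut_unique_aux:
  assumes conn: "graph_connected (theta_V l d) (theta_E l d - r)"
    and q: "q < l"
    and ii: "i < i'" "i' \<le> d q"
    and e1: "edge d q i \<in> r" and e2: "edge d q i' \<in> r"
  shows False
proof -
  let ?X = "{Inner q j | j. i \<le> j \<and> j < i'}"
  have uV: "Inner q i \<in> theta_V l d" using q ii unfolding theta_V_def by auto
  have nV: "North \<in> theta_V l d" unfolding theta_V_def by auto
  have reach: "(Inner q i, North) \<in> {(x, y). {x, y} \<in> theta_E l d - r}\<^sup>*"
    using conn uV nV unfolding graph_connected_def by blast
  have cl: "y \<in> ?X" if "{x, y} \<in> theta_E l d - r" "x \<in> ?X" for x y
  proof -
    from that(2) obtain j where x: "x = Inner q j" "i \<le> j" "j < i'" by blast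
    have nr: "{Inner q j,y} \<notin> r" using that(1) x by auto
    from that(1) x have "{Inner q j,y} \<in> theta_E l d" by auto
    then show ?thesis
    proof (cases rule: E_cases)
      case (a q0)
      then have "q0 = q" "j = 0" "y = North" using dbl1 by blast+
      then have "{Inner q j,y} = edge d q i" using x unfolding edge_def by auto
      then show ?thesis using nr e1 by simp
    next
      case (b q0 j0)
      then have qq: "q0 = q" and o: "(j0 = j \<and> y = Inner q (Suc j)) \<or> (Suc j0 = j \<and> y = Inner q j0)"
        using dbl2 by blast+
      from o show ?thesis
      proof
        assume 1: "j0 = j \<and> y = Inner q (Suc j)"
        show ?thesis
        proof (rule ccontr)
          assume "y \<notin> ?X"
          then have "Suc j = i'" using 1 x by auto
          then have "edge d q i' = {Inner q j,y}" using 1 b qq edge_Suc[of j d q] by simp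
          then show False using nr e2 by simp
        qed
      next
        assume 2: "Suc j0 = j \<and> y = Inner q j0"
        show ?thesis
        proof (rule ccontr)
          assume "y \<notin> ?X"
          then have "j = i" using 2 x by auto
          then have "edge d q i = {y, Inner q j}" using 2 b qq edge_Suc[of j0 d q] by simp
          then show False using nr e1 by (simp add: insert_commute)
        qed
      qed
    next
      case (c q0)
      then have "q0 = q" "j = d q - 1" "y = South" using dbl3 by blast+
      then have "i' = d q" using x ii by auto
      then have "{Inner q j,y} = edge d q i'" using x \<open>y = South\<close> \<open>j = d q - 1\<close> ii unfolding edge_def by auto
      then show ?thesis using nr e2 by simp
    qed
  qed
  have "North \<in> ?X" by (rule closed_reach[OF reach _ cl]) (use ii in auto)
  then show False by auto
qed

lemma cut_unique:
  assumes conn: "graph_connected (theta_V l d) (theta_E l d - r)"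
    and q: "q < l"
    and "i \<le> d q" "i' \<le> d q"
    and "edge d q i \<in> r" "edge d q i' \<in> r"
  shows "i = i'"
  using cut_unique_aux[OF conn q] assms by (metis linorder_neqE_nat)

lemma intact_path:
  assumes conn: "graph_connected (theta_V l d) (theta_E l d - r)"
    and dpos: "\<forall>i<l. d i \<ge> 1"
  shows "\<exists>P<l. \<forall>i\<le>d P. edge d P i \<notin> r"
proof (rule ccontr)
  assume "\<not> ?thesis"
  then have ex: "\<forall>q<l. \<exists>i\<le>d q. edge d q i \<in> r" by auto
  define c where "c q = (LEAST i. edge d q i \<in> r)" for q
  have c1: "edge d q (c q) \<in> r \<and> c q \<le> d q" if ql: "q < l" for q
  proof -
    obtain i where i: "i \<le> d q" "edge d q i \<in> r" using ex ql by blast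
    have "edge d q (c q) \<in> r" unfolding c_def using i(2) by (rule LeastI)
    moreover have "c q \<le> i" unfolding c_def using i(2) by (rule Least_le)
    ultimately show ?thesis using i by simp
  qed
  have c2: "edge d q i \<notin> r" if "i < c q" for q i
    using that unfolding c_def by (rule not_less_Least)
  let ?X = "{North} \<union> {Inner q j | q j. q < l \<and> j < c q}"
  have nV: "North \<in> theta_V l d" "South \<in> theta_V l d" unfolding theta_V_def by auto
  have reach: "(North, South) \<in> {(x, y). {x, y} \<in> theta_E l d - r}\<^sup>*"
    using conn nV unfolding graph_connected_def by blast
  have cl: "y \<in> ?X" if "{x, y} \<in> theta_E l d - r" "x \<in> ?X" for x y
  proof -
    have nr: "{x,y} \<notin> r" using that(1) by auto
    from that(1) have "{x,y} \<in> theta_E l d" by auto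
    then show ?thesis
    proof (cases rule: E_cases)
      case (a q0)
      have e: "edge d q0 0 = {x,y}" using a by simp
      then have "0 < c q0" using nr c1[OF a(2)] by (metis gr0I)
      moreover have "x = North \<and> y = Inner q0 0 \<or> x = Inner q0 0 \<and> y = North"
        using a(1) by (auto simp: doubleton_eq_iff)
      ultimately show ?thesis using a(2) by blast
    next
      case (b q0 j0)
      have ee: "edge d q0 (Suc j0) = {x,y}" using b edge_Suc by simp
      have o: "x = Inner q0 j0 \<and> y = Inner q0 (Suc j0) \<or> x = Inner q0 (Suc j0) \<and> y = Inner q0 j0"
        using b(1) by (auto simp: doubleton_eq_iff)
      then show ?thesis
      proof
        assume 1: "x = Inner q0 j0 \<and> y = Inner q0 (Suc j0)"
        then have "j0 < c q0" using that(2) by auto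
        moreover have "Suc j0 \<noteq> c q0" using ee nr c1[OF b(2)] by auto
        ultimately have "Suc j0 < c q0" by simp
        then show ?thesis using 1 b(2) by blast
      next
        assume 2: "x = Inner q0 (Suc j0) \<and> y = Inner q0 j0"
        then have "Suc j0 < c q0" using that(2) by auto
        then have "j0 < c q0" by simp
        then show ?thesis using 2 b(2) by blast
      qed
    next
      case (c q0)
      have o: "x = Inner q0 (d q0 - 1) \<and> y = South \<or> x = South \<and> y = Inner q0 (d q0 - 1)"
        using c(1) by (auto simp: doubleton_eq_iff)
      have "x \<noteq> South" using that(2) by auto
      then have x: "x = Inner q0 (d q0 - 1)" "y = South" using o by auto
      then have lt: "d q0 - 1 < c q0" using that(2) by auto
      have dp: "0 < d q0" using dpos c(2) by auto
      have "edge d q0 (d q0) = {x,y}" using x dp edge_last by simp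
      moreover have "c q0 = d q0" using lt c1[OF c(2)] by auto
      ultimately show ?thesis using nr c1[OF c(2)] by auto
    qed
  qed
  have "South \<in> ?X" by (rule closed_reach[OF reach _ cl]) simp
  then show False by auto
qed

locale th =
  fixes l k :: nat and d :: "nat \<Rightarrow> nat"
  assumes dpos: "\<forall>i<l. d i \<ge> 1" and kl: "l \<le> k"
begin

definition Ns :: "(nat \<Rightarrow> tnode) \<Rightarrow> nat set" where "Ns p = {b. b \<le> k \<and> p b = North}"
definition anc :: "(nat \<Rightarrow> tnode) \<Rightarrow> nat" where "anc p = Min (Ns p)"
definition Mv :: "nat set \<Rightarrow> (nat \<Rightarrow> tnode) \<Rightarrow> nat set" where
  "Mv I p = (if Ns p = {} then {..k} else {b. b \<le> k \<and> (b \<in> I \<longleftrightarrow> anc p \<notin> I)})"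
definition mpath :: "nat set \<Rightarrow> (nat \<Rightarrow> tnode) \<Rightarrow> nat \<Rightarrow> bool" where
  "mpath I p q \<longleftrightarrow> (\<exists>b\<in>Mv I p. \<exists>j. p b = Inner q j)"
definition istop :: "nat set \<Rightarrow> (nat \<Rightarrow> tnode) \<Rightarrow> nat \<Rightarrow> nat \<Rightarrow> nat \<Rightarrow> bool" where
  "istop I p q j a \<longleftrightarrow> (\<forall>b\<in>Mv I p. \<forall>j'. p b = Inner q j' \<longrightarrow> j < j' \<or> (j = j' \<and> a \<le> b))"
definition isdesc :: "nat set \<Rightarrow> (nat \<Rightarrow> tnode) \<Rightarrow> nat \<Rightarrow> nat \<Rightarrow> nat \<Rightarrow> bool" where
  "isdesc I p q j a \<longleftrightarrow> (\<forall>b\<le>k. b \<notin> Mv I p \<longrightarrow> (\<forall>j'. p b = Inner q j' \<longrightarrow> j' < j \<or> (j' = j \<and> a \<le> b)))"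
definition upn :: "nat \<Rightarrow> nat \<Rightarrow> tnode" where
  "upn q j = (if j = 0 then North else Inner q (j - 1))"
definition downn :: "nat \<Rightarrow> nat \<Rightarrow> tnode" where
  "downn q j = (if Suc j < d q then Inner q (Suc j) else South)"
definition ent :: "nat \<Rightarrow> tnode" where "ent q = Inner q (d q - 1)"
definition Smin :: "nat set \<Rightarrow> (nat \<Rightarrow> tnode) \<Rightarrow> nat" where
  "Smin I p = Min {b \<in> Mv I p. p b = South}"
definition Ffree :: "nat set \<Rightarrow> (nat \<Rightarrow> tnode) \<Rightarrow> tnode set set \<Rightarrow> nat set" where
  "Ffree I p r = {q. q < l \<and> \<not> mpath I p q \<and> edge d q (d q) \<notin> r}"
definition NHmin :: "nat set \<Rightarrow> (nat \<Rightarrow> tnode) \<Rightarrow> nat" where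
  "NHmin I p = Min {b. b \<le> k \<and> b \<notin> Mv I p \<and> p b = North \<and> b \<noteq> anc p}"
definition EPf :: "nat set \<Rightarrow> (nat \<Rightarrow> tnode) \<Rightarrow> tnode set set \<Rightarrow> nat set" where
  "EPf I p r = {q. q < l \<and> (\<forall>b\<le>k. \<forall>j. p b \<noteq> Inner q j) \<and> edge d q 0 \<notin> r}"
definition MPf :: "nat set \<Rightarrow> (nat \<Rightarrow> tnode) \<Rightarrow> tnode set set \<Rightarrow> nat set" where
  "MPf I p r = {q. q < l \<and> mpath I p q \<and> edge d q (d q) \<notin> r}"

definition mv :: "nat set \<Rightarrow> (nat \<Rightarrow> tnode) \<Rightarrow> tnode set set \<Rightarrow> nat \<Rightarrow> tnode" where
  "mv I p r a = (if a \<in> Mv I p then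
    (case p a of North \<Rightarrow> North
     | South \<Rightarrow> (if a = Smin I p \<and> Ffree I p r \<noteq> {} then ent (Min (Ffree I p r)) else South)
     | Inner q j \<Rightarrow> (if istop I p q j a then (if edge d q j \<notin> r then upn q j else Inner q j)
                    else (if edge d q (Suc j) \<notin> r then downn q j else Inner q j)))
   else
    (case p a of North \<Rightarrow> (if a \<noteq> anc p \<and> a = NHmin I p \<and> EPf I p r \<noteq> {} then Inner (Min (EPf I p r)) 0 else North)
     | South \<Rightarrow> (if MPf I p r \<noteq> {} then ent (Min (MPf I p r)) else South)
     | Inner q j \<Rightarrow> (if mpath I p q \<or> \<not> isdesc I p q j a then (if edge d q j \<notin> r then upn q j else Inner q j)
                    else (if edge d q (Suc j) \<notin> r then downn q j else Inner q j))))"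

definition DD :: nat where "DD = (\<Sum>q<l. d q)"

definition potM :: "nat set \<Rightarrow> (nat \<Rightarrow> tnode) \<Rightarrow> nat \<Rightarrow> nat" where
  "potM I p a = (case p a of North \<Rightarrow> 0 | South \<Rightarrow> DD + 1
     | Inner q j \<Rightarrow> (if istop I p q j a then j + 1 else DD + 1 + (d q - j)))"
definition potH :: "nat set \<Rightarrow> (nat \<Rightarrow> tnode) \<Rightarrow> nat \<Rightarrow> nat" where
  "potH I p a = (case p a of North \<Rightarrow> 2 * DD + 2 | South \<Rightarrow> DD + 1
     | Inner q j \<Rightarrow> (if mpath I p q then (if \<exists>b\<in>Mv I p. \<exists>j'. p b = Inner q j' \<and> j' < j then j + 1 else 2 * DD + 3 + j)
                    else (if isdesc I p q j a then DD + 1 + (d q - j) else 2 * DD + 3 + j)))"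

definition step :: "(nat \<Rightarrow> tnode) \<times> nat set \<Rightarrow> tnode set set \<Rightarrow> (nat \<Rightarrow> tnode) \<times> nat set" where
  "step st r = (let p' = mv (snd st) (fst st) r
     in (p', snd st \<union> {a. a \<le> k \<and> (\<exists>b\<in>snd st. b \<le> k \<and> p' a = p' b)}))"

definition mu :: "(nat \<Rightarrow> tnode) \<times> nat set \<Rightarrow> nat \<times> nat \<times> nat \<times> nat" where
  "mu st = (card ({..k} - snd st), (if Ns (fst st) = {} then 1 else 0),
            (\<Sum>a\<in>Mv (snd st) (fst st). potM (snd st) (fst st) a),
            (\<Sum>a\<in>{..k} - Mv (snd st) (fst st). potH (snd st) (fst st) a))"

definition inv :: "(nat \<Rightarrow> tnode) \<times> nat set \<Rightarrow> bool" where
  "inv st \<longleftrightarrow> (\<forall>a\<le>k. fst st a \<in> theta_V l d) \<and> snd st \<subseteq> {..k} \<and> snd st \<noteq> {}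
     \<and> (\<forall>a\<le>k. \<forall>b\<le>k. fst st a = fst st b \<longrightarrow> (a \<in> snd st \<longleftrightarrow> b \<in> snd st))"

definition goodr :: "tnode set set \<Rightarrow> bool" where
  "goodr r \<longleftrightarrow> graph_connected (theta_V l d) (theta_E l d - r)"

lemma validI: "Inner q j \<in> theta_V l d \<longleftrightarrow> q < l \<and> j < d q"
  unfolding theta_V_def by auto
lemma validNS: "North \<in> theta_V l d" "South \<in> theta_V l d"
  unfolding theta_V_def by auto

lemma d_le_DD: "q < l \<Longrightarrow> d q \<le> DD"
  unfolding DD_def by (rule member_le_sum) auto
lemma dq_pos: "q < l \<Longrightarrow> 0 < d q"
  using dpos by fastforce

lemma edge_up: "j < d q \<Longrightarrow> edge d q j = {Inner q j, upn q j}"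
  unfolding edge_def upn_def by (auto simp: insert_commute)
lemma edge_down: "j < d q \<Longrightarrow> edge d q (Suc j) = {Inner q j, downn q j}"
  unfolding edge_def downn_def by auto
lemma edge_ent: "q < l \<Longrightarrow> edge d q (d q) = {South, ent q}"
  using dq_pos[of q] unfolding ent_def by (simp add: edge_last insert_commute)

lemma upn_valid: "q < l \<Longrightarrow> j < d q \<Longrightarrow> upn q j \<in> theta_V l d"
  unfolding upn_def by (auto simp: validI validNS)
lemma downn_valid: "q < l \<Longrightarrow> j < d q \<Longrightarrow> downn q j \<in> theta_V l d"
  unfolding downn_def by (auto simp: validI validNS)
lemma ent_valid: "q < l \<Longrightarrow> ent q \<in> theta_V l d"
  unfolding ent_def using dq_pos[of q] by (auto simp: validI)

lemma upn_ne: "upn q j \<noteq> Inner q j" unfolding upn_def by auto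
lemma downn_ne: "downn q j \<noteq> Inner q j" unfolding downn_def by auto

end

context th begin

lemma fin_Ffree: "finite (Ffree I p r)" unfolding Ffree_def by (rule finite_subset[of _ "{..<l}"]) auto
lemma fin_EPf: "finite (EPf I p r)" unfolding EPf_def by (rule finite_subset[of _ "{..<l}"]) auto
lemma fin_MPf: "finite (MPf I p r)" unfolding MPf_def by (rule finite_subset[of _ "{..<l}"]) auto

lemma Min_Ffree: "Ffree I p r \<noteq> {} \<Longrightarrow> Min (Ffree I p r) \<in> Ffree I p r"
  using fin_Ffree by (rule Min_in)
lemma Min_EPf: "EPf I p r \<noteq> {} \<Longrightarrow> Min (EPf I p r) \<in> EPf I p r"
  using fin_EPf by (rule Min_in)
lemma Min_MPf: "MPf I p r \<noteq> {} \<Longrightarrow> Min (MPf I p r) \<in> MPf I p r"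
  using fin_MPf by (rule Min_in)

lemma move_up_ok:
  assumes "q < l" "j < d q" "edge d q j \<notin> r"
  shows "{Inner q j, upn q j} \<in> theta_E l d - r \<and> upn q j \<in> theta_V l d"
  using assms edge_up[of j q] edge_in_E[of q l j d] dq_pos[of q] upn_valid by auto
lemma move_down_ok:
  assumes "q < l" "j < d q" "edge d q (Suc j) \<notin> r"
  shows "{Inner q j, downn q j} \<in> theta_E l d - r \<and> downn q j \<in> theta_V l d"
  using assms edge_down[of j q] edge_in_E[of q l "Suc j" d] dq_pos[of q] downn_valid by auto
lemma move_ent_ok:
  assumes "q < l" "edge d q (d q) \<notin> r"
  shows "{South, ent q} \<in> theta_E l d - r \<and> ent q \<in> theta_V l d"
  using assms edge_ent[of q] edge_in_E[of q l "d q" d] dq_pos[of q] ent_valid by auto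
lemma move_N_ok:
  assumes "q < l" "edge d q 0 \<notin> r"
  shows "{North, Inner q 0} \<in> theta_E l d - r \<and> Inner q 0 \<in> theta_V l d"
  using assms edge_in_E[of q l 0 d] dq_pos[of q] by (auto simp: validI)

lemma mv_MN: "a \<in> Mv I p \<Longrightarrow> p a = North \<Longrightarrow> mv I p r a = North"
  unfolding mv_def by simp
lemma mv_MS: "a \<in> Mv I p \<Longrightarrow> p a = South \<Longrightarrow>
   mv I p r a = (if a = Smin I p \<and> Ffree I p r \<noteq> {} then ent (Min (Ffree I p r)) else South)"
  unfolding mv_def by simp
lemma mv_MI: "a \<in> Mv I p \<Longrightarrow> p a = Inner q j \<Longrightarrow>
   mv I p r a = (if istop I p q j a then (if edge d q j \<notin> r then upn q j else Inner q j)
                    else (if edge d q (Suc j) \<notin> r then downn q j else Inner q j))"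
  unfolding mv_def by simp
lemma mv_HN: "a \<notin> Mv I p \<Longrightarrow> p a = North \<Longrightarrow>
   mv I p r a = (if a \<noteq> anc p \<and> a = NHmin I p \<and> EPf I p r \<noteq> {} then Inner (Min (EPf I p r)) 0 else North)"
  unfolding mv_def by simp
lemma mv_HS: "a \<notin> Mv I p \<Longrightarrow> p a = South \<Longrightarrow>
   mv I p r a = (if MPf I p r \<noteq> {} then ent (Min (MPf I p r)) else South)"
  unfolding mv_def by simp
lemma mv_HI: "a \<notin> Mv I p \<Longrightarrow> p a = Inner q j \<Longrightarrow>
   mv I p r a = (if mpath I p q \<or> \<not> isdesc I p q j a then (if edge d q j \<notin> r then upn q j else Inner q j)
                    else (if edge d q (Suc j) \<notin> r then downn q j else Inner q j))"
  unfolding mv_def by simp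

lemma mv_cases:
  assumes "p a = Inner q j"
  shows "mv I p r a = Inner q j \<or> (mv I p r a = upn q j \<and> edge d q j \<notin> r)
        \<or> (mv I p r a = downn q j \<and> edge d q (Suc j) \<notin> r)"
proof (cases "a \<in> Mv I p")
  case True then show ?thesis using mv_MI[OF True assms, of r] by (simp split: if_split)
next
  case False then show ?thesis using mv_HI[OF False assms, of r] by (simp split: if_split)
qed

lemma mv_legal:
  assumes v: "p a \<in> theta_V l d"
  shows "mv I p r a = p a \<or> ({p a, mv I p r a} \<in> theta_E l d - r \<and> mv I p r a \<in> theta_V l d)"
proof (cases "p a")
  case North
  show ?thesis
  proof (cases "a \<in> Mv I p")
    case True then show ?thesis using mv_MN[OF True North] North by simp
  next
    case False
    show ?thesis
    proof (cases "a \<noteq> anc p \<and> a = NHmin I p \<and> EPf I p r \<noteq> {}")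
      case True
      then have m: "Min (EPf I p r) \<in> EPf I p r" using Min_EPf by blast
      have "mv I p r a = Inner (Min (EPf I p r)) 0" by (subst mv_HN[OF False North]) (rule if_P[OF True])
      then show ?thesis using move_N_ok[of "Min (EPf I p r)"] m North unfolding EPf_def by auto
    next
      case F2: False
      have "mv I p r a = North" by (subst mv_HN[OF False North]) (rule if_not_P[OF F2])
      then show ?thesis using North by simp
    qed
  qed
next
  case South
  show ?thesis
  proof (cases "a \<in> Mv I p")
    case True
    show ?thesis
    proof (cases "a = Smin I p \<and> Ffree I p r \<noteq> {}")
      case T2: True
      then have m: "Min (Ffree I p r) \<in> Ffree I p r" using Min_Ffree by blast
      have "mv I p r a = ent (Min (Ffree I p r))" by (subst mv_MS[OF True South]) (rule if_P[OF T2])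
      then show ?thesis using move_ent_ok[of "Min (Ffree I p r)"] m South unfolding Ffree_def by auto
    next
      case F2: False
      have "mv I p r a = South" by (subst mv_MS[OF True South]) (rule if_not_P[OF F2])
      then show ?thesis using South by simp
    qed
  next
    case False
    show ?thesis
    proof (cases "MPf I p r \<noteq> {}")
      case T2: True
      then have m: "Min (MPf I p r) \<in> MPf I p r" using Min_MPf by blast
      have "mv I p r a = ent (Min (MPf I p r))" by (subst mv_HS[OF False South]) (rule if_P[OF T2])
      then show ?thesis using move_ent_ok[of "Min (MPf I p r)"] m South unfolding MPf_def by auto
    next
      case F2: False
      have "mv I p r a = South" by (subst mv_HS[OF False South]) (rule if_not_P[OF F2])
      then show ?thesis using South by simp
    qed
  qed
next
  case (Inner q j)
  then have qj: "q < l" "j < d q" using v by (auto simp: validI)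
  consider (s) "mv I p r a = Inner q j" | (u) "mv I p r a = upn q j" "edge d q j \<notin> r"
    | (dn) "mv I p r a = downn q j" "edge d q (Suc j) \<notin> r"
    using mv_cases[of p a q j I r, OF Inner] by blast
  then show ?thesis
  proof cases
    case s then show ?thesis using Inner by simp
  next
    case u then show ?thesis using move_up_ok[OF qj u(2)] Inner by simp
  next
    case dn then show ?thesis using move_down_ok[OF qj dn(2)] Inner by simp
  qed
qed

lemma mv_valid: "p a \<in> theta_V l d \<Longrightarrow> mv I p r a \<in> theta_V l d"
  using mv_legal[of p a I r] by auto

lemma inv_step: assumes "inv (p, I)" shows "inv (step (p, I) r)"
proof -
  define p' where "p' = mv I p r"
  define I' where "I' = I \<union> {a. a \<le> k \<and> (\<exists>b\<in>I. b \<le> k \<and> p' a = p' b)}"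
  have st: "step (p, I) r = (p', I')" unfolding step_def p'_def I'_def Let_def by simp
  have pv: "\<forall>a\<le>k. p a \<in> theta_V l d" and ik: "I \<subseteq> {..k}" and ine: "I \<noteq> {}"
    using assms unfolding inv_def by auto
  have v: "\<forall>a\<le>k. p' a \<in> theta_V l d"
  proof (intro allI impI)
    fix a assume "a \<le> k" then show "p' a \<in> theta_V l d" unfolding p'_def using pv mv_valid by blast
  qed
  have s1: "I' \<subseteq> {..k}" unfolding I'_def using ik by blast
  have s2: "I' \<noteq> {}" unfolding I'_def using ine by blast
  have m1: "b \<in> I'" if "a \<in> I'" "b \<le> k" "p' a = p' b" for a b
  proof -
    from that(1) have "a \<in> I \<or> (\<exists>c\<in>I. c \<le> k \<and> p' a = p' c)" unfolding I'_def by blast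
    then show ?thesis
    proof
      assume aI: "a \<in> I"
      then have "a \<le> k" using ik by auto
      then have "\<exists>c\<in>I. c \<le> k \<and> p' b = p' c" using aI that(3) by metis
      then show ?thesis unfolding I'_def using that(2) by simp
    next
      assume "\<exists>c\<in>I. c \<le> k \<and> p' a = p' c"
      then have "\<exists>c\<in>I. c \<le> k \<and> p' b = p' c" using that(3) by metis
      then show ?thesis unfolding I'_def using that(2) by simp
    qed
  qed
  have m: "\<forall>a\<le>k. \<forall>b\<le>k. p' a = p' b \<longrightarrow> (a \<in> I' \<longleftrightarrow> b \<in> I')"
  proof (intro allI impI)
    fix a b assume "a \<le> k" "b \<le> k" "p' a = p' b"
    then show "a \<in> I' \<longleftrightarrow> b \<in> I'" using m1[of a b] m1[of b a] by auto
  qed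
  show ?thesis unfolding st inv_def fst_conv snd_conv using v s1 s2 m by blast
qed

end

context th begin

lemma upn_Inner: "upn q j = Inner q' j' \<Longrightarrow> q' = q \<and> j = Suc j'"
  unfolding upn_def by (auto split: if_splits)
lemma downn_Inner: "downn q j = Inner q' j' \<Longrightarrow> q' = q \<and> j' = Suc j"
  unfolding downn_def by (auto split: if_splits)
lemma upn_North: "upn q j = North \<Longrightarrow> j = 0"
  unfolding upn_def by (auto split: if_splits)
lemma upn_South: "upn q j \<noteq> South"
  unfolding upn_def by (auto split: if_splits)
lemma downn_North: "downn q j \<noteq> North"
  unfolding downn_def by (auto split: if_splits)
lemma ent_Inner: "ent q = Inner q' j' \<Longrightarrow> q' = q \<and> j' = d q - 1"
  unfolding ent_def by auto

end

locale rnd = th +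
  fixes p :: "nat \<Rightarrow> tnode" and I :: "nat set" and r :: "tnode set set"
  assumes iv: "inv (p, I)" and gr: "goodr r" and nd: "\<not> {..k} \<subseteq> I"
begin

abbreviation "M \<equiv> Mv I p"
abbreviation "p' \<equiv> mv I p r"

lemma ivs: "(\<forall>a\<le>k. p a \<in> theta_V l d) \<and> I \<subseteq> {..k} \<and> I \<noteq> {}
     \<and> (\<forall>a\<le>k. \<forall>b\<le>k. p a = p b \<longrightarrow> (a \<in> I \<longleftrightarrow> b \<in> I))"
  using iv unfolding inv_def fst_conv snd_conv .
lemma pv: "a \<le> k \<Longrightarrow> p a \<in> theta_V l d" using ivs by blast
lemma Ik: "I \<subseteq> {..k}" using ivs by blast
lemma Ine: "I \<noteq> {}" using ivs by blast
lemma mono: "a \<le> k \<Longrightarrow> b \<le> k \<Longrightarrow> p a = p b \<Longrightarrow> (a \<in> I \<longleftrightarrow> b \<in> I)"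
  using ivs by blast
lemma pI: "a \<le> k \<Longrightarrow> p a = Inner q j \<Longrightarrow> q < l \<and> j < d q"
  using pv[of a] by (auto simp: validI)

lemma cutu: "q < l \<Longrightarrow> i \<le> d q \<Longrightarrow> i' \<le> d q \<Longrightarrow> edge d q i \<in> r \<Longrightarrow> edge d q i' \<in> r \<Longrightarrow> i = i'"
  using cut_unique[of l d r q i i'] gr unfolding goodr_def by auto

lemma intact: obtains P where "P < l" "\<And>i. i \<le> d P \<Longrightarrow> edge d P i \<notin> r"
  using intact_path[of l d r] gr dpos unfolding goodr_def by auto

lemma Mk: "M \<subseteq> {..k}" unfolding Mv_def by auto

lemma fin_Ns: "finite (Ns p)" unfolding Ns_def by auto
lemma anc_in: "Ns p \<noteq> {} \<Longrightarrow> anc p \<in> Ns p" unfolding anc_def using fin_Ns by (rule Min_in)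
lemma anc_k: "Ns p \<noteq> {} \<Longrightarrow> anc p \<le> k \<and> p (anc p) = North" using anc_in unfolding Ns_def by auto
lemma anc_notM: "Ns p \<noteq> {} \<Longrightarrow> anc p \<notin> M" unfolding Mv_def by auto
lemma M_cls: "Ns p \<noteq> {} \<Longrightarrow> a \<in> M \<Longrightarrow> b \<le> k \<Longrightarrow> b \<notin> M \<Longrightarrow> (a \<in> I \<longleftrightarrow> b \<notin> I)"
  unfolding Mv_def by auto

lemma top_move: "a \<in> M \<Longrightarrow> p a = Inner q j \<Longrightarrow> istop I p q j a \<Longrightarrow>
   (p' a = Inner q j \<and> edge d q j \<in> r) \<or> (p' a = upn q j \<and> edge d q j \<notin> r)"
  using mv_MI[of a I p q j r] by auto
lemma ntop_move: "a \<in> M \<Longrightarrow> p a = Inner q j \<Longrightarrow> \<not> istop I p q j a \<Longrightarrow>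
   (p' a = Inner q j \<and> edge d q (Suc j) \<in> r) \<or> (p' a = downn q j \<and> edge d q (Suc j) \<notin> r)"
  using mv_MI[of a I p q j r] by auto
lemma hup_move: "a \<notin> M \<Longrightarrow> p a = Inner q j \<Longrightarrow> mpath I p q \<or> \<not> isdesc I p q j a \<Longrightarrow>
   (p' a = Inner q j \<and> edge d q j \<in> r) \<or> (p' a = upn q j \<and> edge d q j \<notin> r)"
  using mv_HI[of a I p q j r] by auto
lemma hdown_move: "a \<notin> M \<Longrightarrow> p a = Inner q j \<Longrightarrow> \<not> mpath I p q \<Longrightarrow> isdesc I p q j a \<Longrightarrow>
   (p' a = Inner q j \<and> edge d q (Suc j) \<in> r) \<or> (p' a = downn q j \<and> edge d q (Suc j) \<notin> r)"
  using mv_HI[of a I p q j r] by auto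

lemma origin:
  assumes "p' b = Inner q j"
  shows "(\<exists>jb. p b = Inner q jb) \<or>
   (p b = South \<and> b \<in> M \<and> q \<in> Ffree I p r \<and> b = Smin I p) \<or>
   (p b = South \<and> b \<notin> M \<and> q \<in> MPf I p r) \<or>
   (p b = North \<and> b \<notin> M \<and> q \<in> EPf I p r \<and> b = NHmin I p \<and> b \<noteq> anc p \<and> j = 0)"
proof (cases "p b")
  case North
  show ?thesis
  proof (cases "b \<in> M")
    case True then show ?thesis using mv_MN[OF True North, of r] assms by simp
  next
    case False
    show ?thesis
    proof (cases "b \<noteq> anc p \<and> b = NHmin I p \<and> EPf I p r \<noteq> {}")
      case True
      have "p' b = Inner (Min (EPf I p r)) 0" by (subst mv_HN[OF False North]) (rule if_P[OF True])
      then have "q = Min (EPf I p r) \<and> j = 0" using assms by simp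
      then have "q \<in> EPf I p r \<and> j = 0" using True Min_EPf[of I p r] by simp
      then have "p b = North \<and> b \<notin> M \<and> q \<in> EPf I p r \<and> b = NHmin I p \<and> b \<noteq> anc p \<and> j = 0"
        using True False North by simp
      then show ?thesis by (intro disjI2)
    next
      case F2: False
      have "p' b = North" by (subst mv_HN[OF False North]) (rule if_not_P[OF F2])
      then show ?thesis using assms by simp
    qed
  qed
next
  case South
  show ?thesis
  proof (cases "b \<in> M")
    case True
    show ?thesis
    proof (cases "b = Smin I p \<and> Ffree I p r \<noteq> {}")
      case T2: True
      have "p' b = ent (Min (Ffree I p r))" by (subst mv_MS[OF True South]) (rule if_P[OF T2])
      then have "ent (Min (Ffree I p r)) = Inner q j" using assms by simp
      then have "q = Min (Ffree I p r)" by (drule_tac ent_Inner) simp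
      then have "q \<in> Ffree I p r" using T2 Min_Ffree[of I p r] by simp
      then have "p b = South \<and> b \<in> M \<and> q \<in> Ffree I p r \<and> b = Smin I p" using T2 True South by simp
      then show ?thesis by (intro disjI2 disjI1)
    next
      case F2: False
      have "p' b = South" by (subst mv_MS[OF True South]) (rule if_not_P[OF F2])
      then show ?thesis using assms by simp
    qed
  next
    case False
    show ?thesis
    proof (cases "MPf I p r \<noteq> {}")
      case T2: True
      have "p' b = ent (Min (MPf I p r))" by (subst mv_HS[OF False South]) (rule if_P[OF T2])
      then have "ent (Min (MPf I p r)) = Inner q j" using assms by simp
      then have "q = Min (MPf I p r)" by (drule_tac ent_Inner) simp
      then have "q \<in> MPf I p r" using T2 Min_MPf[of I p r] by simp
      then have "p b = South \<and> b \<notin> M \<and> q \<in> MPf I p r" using False South by simp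
      then show ?thesis by (intro disjI2 disjI1)
    next
      case F2: False
      have "p' b = South" by (subst mv_HS[OF False South]) (rule if_not_P[OF F2])
      then show ?thesis using assms by simp
    qed
  qed
next
  case (Inner q0 j0)
  have "p' b = Inner q0 j0 \<or> p' b = upn q0 j0 \<or> p' b = downn q0 j0"
    using mv_cases[of p b q0 j0 I r, OF Inner] by blast
  then have "q0 = q" using assms upn_Inner downn_Inner by fastforce
  then show ?thesis using Inner by simp
qed

end

context rnd begin

lemma top_cmp: "istop I p q ja a \<Longrightarrow> b \<in> M \<Longrightarrow> p b = Inner q jb \<Longrightarrow> ja < jb \<or> (ja = jb \<and> a \<le> b)"
  unfolding istop_def by blast

lemma top_uniq: "a \<in> M \<Longrightarrow> b \<in> M \<Longrightarrow> p a = Inner q ja \<Longrightarrow> p b = Inner q jb \<Longrightarrow>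
    istop I p q ja a \<Longrightarrow> istop I p q jb b \<Longrightarrow> a = b"
  using top_cmp[of q ja a b jb] top_cmp[of q jb b a ja] by auto

lemma top_ex:
  assumes "b0 \<in> M" "p b0 = Inner q j0"
  shows "\<exists>b\<in>M. \<exists>jb. p b = Inner q jb \<and> istop I p q jb b"
proof -
  define jm where "jm = (LEAST j. \<exists>b\<in>M. p b = Inner q j)"
  have ex0: "\<exists>j. \<exists>b\<in>M. p b = Inner q j" using assms by blast
  have "\<exists>b\<in>M. p b = Inner q jm" unfolding jm_def using LeastI_ex[OF ex0] .
  define bm where "bm = (LEAST b. b \<in> M \<and> p b = Inner q jm)"
  have bm: "bm \<in> M \<and> p bm = Inner q jm" unfolding bm_def
    using \<open>\<exists>b\<in>M. p b = Inner q jm\<close> by (metis (mono_tags, lifting) LeastI)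
  have "istop I p q jm bm" unfolding istop_def
  proof (intro ballI allI impI)
    fix b j' assume b: "b \<in> M" "p b = Inner q j'"
    then have "jm \<le> j'" unfolding jm_def by (metis (mono_tags, lifting) Least_le)
    moreover have "j' = jm \<Longrightarrow> bm \<le> b" unfolding bm_def using b by (metis (mono_tags, lifting) Least_le)
    ultimately show "jm < j' \<or> jm = j' \<and> bm \<le> b" by auto
  qed
  then show ?thesis using bm by blast
qed

lemma desc_cmp: "isdesc I p q ja a \<Longrightarrow> b \<le> k \<Longrightarrow> b \<notin> M \<Longrightarrow> p b = Inner q jb \<Longrightarrow> jb < ja \<or> (jb = ja \<and> a \<le> b)"
  unfolding isdesc_def by blast

lemma desc_uniq: "a \<le> k \<Longrightarrow> a \<notin> M \<Longrightarrow> b \<le> k \<Longrightarrow> b \<notin> M \<Longrightarrow> p a = Inner q ja \<Longrightarrow> p b = Inner q jb \<Longrightarrow>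
    isdesc I p q ja a \<Longrightarrow> isdesc I p q jb b \<Longrightarrow> a = b"
  using desc_cmp[of q ja a b jb] desc_cmp[of q jb b a ja] by auto

lemma desc_ex:
  assumes "b0 \<le> k" "b0 \<notin> M" "p b0 = Inner q j0"
  shows "\<exists>b\<le>k. b \<notin> M \<and> (\<exists>jb. p b = Inner q jb \<and> isdesc I p q jb b)"
proof -
  let ?S = "{j. \<exists>b\<le>k. b \<notin> M \<and> p b = Inner q j}"
  have fin: "finite ?S"
  proof (rule finite_subset[of _ "{..<d q}"])
    show "?S \<subseteq> {..<d q}" using pI by auto
  qed simp
  have ne: "j0 \<in> ?S" using assms by blast
  define jm where "jm = Max ?S"
  have "jm \<in> ?S" unfolding jm_def using fin ne by (metis (no_types, lifting) Max_in empty_iff)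
  then have ex: "\<exists>b. b \<le> k \<and> b \<notin> M \<and> p b = Inner q jm" by blast
  define bm where "bm = (LEAST b. b \<le> k \<and> b \<notin> M \<and> p b = Inner q jm)"
  have bm: "bm \<le> k \<and> bm \<notin> M \<and> p bm = Inner q jm" unfolding bm_def
    using ex by (metis (mono_tags, lifting) LeastI)
  have "isdesc I p q jm bm" unfolding isdesc_def
  proof (intro allI impI)
    fix b j' assume b: "b \<le> k" "b \<notin> M" "p b = Inner q j'"
    then have "j' \<in> ?S" by blast
    then have "j' \<le> jm" unfolding jm_def using fin by simp
    moreover have "j' = jm \<Longrightarrow> bm \<le> b" unfolding bm_def using b by (metis (mono_tags, lifting) Least_le)
    ultimately show "j' < jm \<or> j' = jm \<and> bm \<le> b" by auto
  qed
  then show ?thesis using bm by blast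
qed

lemma mpathI: "b \<in> M \<Longrightarrow> p b = Inner q j \<Longrightarrow> mpath I p q"
  unfolding mpath_def by blast

end

context rnd begin

lemma Ffree_nm: "q \<in> Ffree I p r \<Longrightarrow> \<not> mpath I p q" unfolding Ffree_def by blast
lemma Ffree_l: "q \<in> Ffree I p r \<Longrightarrow> q < l" unfolding Ffree_def by blast
lemma MPf_m: "q \<in> MPf I p r \<Longrightarrow> mpath I p q \<and> q < l" unfolding MPf_def by blast
lemma EPf_e: "q \<in> EPf I p r \<Longrightarrow> b \<le> k \<Longrightarrow> p b \<noteq> Inner q j" unfolding EPf_def by blast
lemma EPf_l: "q \<in> EPf I p r \<Longrightarrow> q < l" unfolding EPf_def by blast

lemma potM_Inner: "p0 a = Inner q j \<Longrightarrow> potM I0 p0 a = (if istop I0 p0 q j a then j + 1 else DD + 1 + (d q - j))"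
  unfolding potM_def by simp
lemma potM_South: "p0 a = South \<Longrightarrow> potM I0 p0 a = DD + 1"
  unfolding potM_def by simp
lemma potM_North: "p0 a = North \<Longrightarrow> potM I0 p0 a = 0"
  unfolding potM_def by simp

context
  assumes HM: "Mv I p' = M" and NN: "\<forall>a\<in>M. p a \<noteq> North \<longrightarrow> p' a \<noteq> North"
begin

lemma top_after:
  assumes a: "a \<in> M" "p a = Inner q j" "istop I p q j a" "p' a = Inner q j'" "j' \<le> j"
  shows "istop I p' q j' a"
  unfolding istop_def HM
proof (intro ballI allI impI)
  fix b jb' assume b: "b \<in> M" "p' b = Inner q jb'"
  have mp: "mpath I p q" using mpathI a(1,2) by blast
  from origin[OF b(2)] b(1) mp obtain jb where jb: "p b = Inner q jb"
    using Ffree_nm by blast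
  show "j' < jb' \<or> j' = jb' \<and> a \<le> b"
  proof (cases "b = a")
    case True then show ?thesis using a(4) b(2) by simp
  next
    case False
    have c: "j < jb \<or> j = jb \<and> a \<le> b" using top_cmp[OF a(3) b(1) jb] .
    have nt: "\<not> istop I p q jb b" using top_uniq[OF a(1) b(1) a(2) jb a(3)] False by blast
    have "jb' = jb \<or> jb' = Suc jb"
      using ntop_move[OF b(1) jb nt]
    proof
      assume "p' b = Inner q jb \<and> edge d q (Suc jb) \<in> r"
      then show ?thesis using b(2) by simp
    next
      assume "p' b = downn q jb \<and> edge d q (Suc jb) \<notin> r"
      then have "downn q jb = Inner q jb'" using b(2) by simp
      then show ?thesis using downn_Inner by blast
    qed
    then show ?thesis using c a(5) by auto
  qed
qed

lemma potM_mono: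
  assumes aM: "a \<in> M"
  shows "potM I p' a \<le> potM I p a \<and> (p' a \<noteq> p a \<longrightarrow> potM I p' a < potM I p a)"
proof (cases "p a")
  case North
  have "p' a = North" using mv_MN[OF aM North, of r] .
  then show ?thesis using North potM_North[of p a I] potM_North[of "p'" a I] by simp
next
  case South
  show ?thesis
  proof (cases "a = Smin I p \<and> Ffree I p r \<noteq> {}")
    case T2: True
    define q0 where "q0 = Min (Ffree I p r)"
    have q0: "q0 \<in> Ffree I p r" unfolding q0_def using T2 Min_Ffree by blast
    have mva: "p' a = ent q0" unfolding q0_def by (subst mv_MS[OF aM South]) (rule if_P[OF T2])
    then have mva': "p' a = Inner q0 (d q0 - 1)" unfolding ent_def .
    have ql: "q0 < l" using Ffree_l[OF q0] .
    have "istop I p' q0 (d q0 - 1) a"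
      unfolding istop_def HM
    proof (intro ballI allI impI)
      fix b jb' assume b: "b \<in> M" "p' b = Inner q0 jb'"
      have "\<not> (\<exists>jb. p b = Inner q0 jb)" using Ffree_nm[OF q0] mpathI b(1) by blast
      then have "b = Smin I p" using origin[OF b(2)] b(1) by blast
      then have "b = a" using T2 by simp
      then show "d q0 - 1 < jb' \<or> d q0 - 1 = jb' \<and> a \<le> b" using b(2) mva' by simp
    qed
    then have "potM I p' a = d q0 - 1 + 1" using potM_Inner[of "p'" a q0 "d q0 - 1" I, OF mva'] by simp
    also have "\<dots> \<le> DD" using d_le_DD[OF ql] dq_pos[OF ql] by simp
    finally show ?thesis using potM_South[of p a I, OF South] by simp
  next
    case F2: False
    have "p' a = South" by (subst mv_MS[OF aM South]) (rule if_not_P[OF F2])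
    then show ?thesis using South potM_South[of p a I] potM_South[of "p'" a I] by simp
  qed
next
  case (Inner q j)
  have qj: "q < l" "j < d q" using pI Inner aM Mk by auto
  have dq: "d q \<le> DD" using d_le_DD[OF qj(1)] .
  show ?thesis
  proof (cases "istop I p q j a")
    case True
    have pa: "potM I p a = j + 1" using potM_Inner[of p a q j I, OF Inner] True by simp
    from top_move[OF aM Inner True]
    show ?thesis
    proof
      assume s: "p' a = Inner q j \<and> edge d q j \<in> r"
      then have "istop I p' q j a" using top_after[OF aM Inner True] by simp
      then show ?thesis using potM_Inner[of p' a q j] s pa Inner by simp
    next
      assume u: "p' a = upn q j \<and> edge d q j \<notin> r"
      have "p' a \<noteq> North" using NN aM Inner by simp
      then have j0: "j \<noteq> 0" using u unfolding upn_def by (cases "j = 0") auto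
      then have u': "p' a = Inner q (j - 1)" using u unfolding upn_def by simp
      then have "istop I p' q (j - 1) a" using top_after[OF aM Inner True] by simp
      then have "potM I p' a = j" using potM_Inner[of "p'" a q "j - 1" I, OF u'] j0 by simp
      then show ?thesis using pa by simp
    qed
  next
    case False
    have pa: "potM I p a = DD + 1 + (d q - j)" using potM_Inner[of p a q j I, OF Inner] False by simp
    from ntop_move[OF aM Inner False]
    show ?thesis
    proof
      assume s: "p' a = Inner q j \<and> edge d q (Suc j) \<in> r"
      have "potM I p' a \<le> DD + 1 + (d q - j)" using potM_Inner[of p' a q j] s qj dq by auto
      then show ?thesis using pa s Inner by simp
    next
      assume dn: "p' a = downn q j \<and> edge d q (Suc j) \<notin> r"
      show ?thesis
      proof (cases "Suc j < d q")
        case True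
        then have dn': "p' a = Inner q (Suc j)" using dn unfolding downn_def by simp
        have "potM I p' a < DD + 1 + (d q - j)" using potM_Inner[of "p'" a q "Suc j" I, OF dn'] True dq by auto
        then show ?thesis using pa by simp
      next
        case False
        then have "p' a = South" using dn unfolding downn_def by simp
        then have "potM I p' a = DD + 1" using potM_South by simp
        then show ?thesis using pa qj by (simp add: less_diff_conv)
      qed
    qed
  qed
qed

end
end

fun pth :: "tnode \<Rightarrow> nat" where
  "pth (Inner q j) = q" | "pth North = 0" | "pth South = 0"

lemma card_paths:
  assumes "finite A" "inj_on f A" "f ` A \<subseteq> {..<l} - {P}" "P < (l::nat)"
  shows "card A \<le> l - 1"
proof -
  have "card A \<le> card ({..<l} - {P})" using card_inj_on_le[OF assms(2,3)] by simp
  also have "\<dots> = l - 1" using assms(4) by simp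
  finally show ?thesis .
qed

context rnd begin

lemma M_ne: "Ns p \<noteq> {} \<Longrightarrow> M \<noteq> {}"
proof -
  assume ne: "Ns p \<noteq> {}"
  show "M \<noteq> {}"
  proof (cases "anc p \<in> I")
    case True
    obtain b where "b \<le> k" "b \<notin> I" using nd by auto
    then have "b \<in> M" unfolding Mv_def using ne True by simp
    then show ?thesis by blast
  next
    case False
    obtain b where "b \<in> I" using Ine by auto
    then have "b \<le> k" using Ik by auto
    then have "b \<in> M" unfolding Mv_def using ne False \<open>b \<in> I\<close> by simp
    then show ?thesis by blast
  qed
qed

lemma fin_Sset: "finite {b \<in> M. p b = South}"
  by (rule finite_subset[of _ "{..k}"]) (use Mk in auto)

lemma mover_on_P_moves:
  assumes P: "P < l" "\<And>i. i \<le> d P \<Longrightarrow> edge d P i \<notin> r"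
    and b: "b \<in> M" "p b = Inner P j"
  shows "p' b \<noteq> p b"
proof -
  have j: "j < d P" using pI[of b P j] b Mk by auto
  show ?thesis
  proof (cases "istop I p P j b")
    case True
    have "edge d P j \<notin> r" using P(2) j by simp
    then show ?thesis using top_move[OF b True] b(2) upn_ne by auto
  next
    case False
    have "edge d P (Suc j) \<notin> r" using P(2) j by simp
    then show ?thesis using ntop_move[OF b False] b(2) downn_ne by auto
  qed
qed

lemma mover_stall:
  assumes st: "\<forall>a\<in>M. p' a = p a" and noN: "\<forall>a\<in>M. p a \<noteq> North"
    and P: "P < l" "\<And>i. i \<le> d P \<Longrightarrow> edge d P i \<notin> r"
    and aM: "a \<in> M"
  shows "\<exists>q j. p a = Inner q j \<and> q \<noteq> P \<and> istop I p q j a \<and> edge d q j \<in> r"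
proof (cases "p a")
  case North then show ?thesis using noN aM by simp
next
  case South
  define s where "s = Smin I p"
  have sin: "s \<in> {b \<in> M. p b = South}" unfolding s_def Smin_def
    using fin_Sset South aM by (metis (mono_tags, lifting) Min_in empty_iff mem_Collect_eq)
  have nmP: "\<not> mpath I p P"
  proof
    assume "mpath I p P"
    then obtain b j where "b \<in> M" "p b = Inner P j" unfolding mpath_def by blast
    then show False using mover_on_P_moves[OF P] st by simp
  qed
  have "P \<in> Ffree I p r" unfolding Ffree_def using P nmP by simp
  then have T2: "s = Smin I p \<and> Ffree I p r \<noteq> {}" using s_def by blast
  have sM: "s \<in> M" "p s = South" using sin by auto
  have "p' s = ent (Min (Ffree I p r))"
    by (subst mv_MS[OF sM]) (rule if_P[OF T2])
  then have "p' s \<noteq> p s" using sin unfolding ent_def by auto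
  then show ?thesis using st sin by auto
next
  case (Inner q j)
  have qj: "q < l" "j < d q" using pI[of a q j] Inner aM Mk by auto
  have tp: "istop I p q j a"
  proof (rule ccontr)
    assume nt: "\<not> istop I p q j a"
    obtain b jb where b: "b \<in> M" "p b = Inner q jb" "istop I p q jb b" using top_ex[OF aM Inner] by blast
    have jb: "jb < d q" using pI[of b q jb] b Mk by auto
    have sb: "p' b = Inner q jb" using st b(1,2) by simp
    have e1: "edge d q jb \<in> r" using top_move[OF b(1,2,3)] sb upn_ne[of q jb] by auto
    have sa: "p' a = Inner q j" using st aM Inner by simp
    have e2: "edge d q (Suc j) \<in> r" using ntop_move[OF aM Inner nt] sa downn_ne[of q j] by auto
    have "jb \<le> j" using top_cmp[OF b(3) aM Inner] by auto
    moreover have "jb = Suc j" using cutu[OF qj(1) _ _ e1 e2] jb qj by simp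
    ultimately show False by simp
  qed
  have sa: "p' a = Inner q j" using st aM Inner by simp
  have e: "edge d q j \<in> r" using top_move[OF aM Inner tp] sa upn_ne[of q j] by auto
  have "q \<noteq> P" using e P(2) qj by auto
  then show ?thesis using Inner tp e by blast
qed

lemma mover_count_contra:
  assumes st: "\<forall>a\<in>M. p' a = p a" and noN: "\<forall>a\<in>M. p a \<noteq> North"
    and P: "P < l" "\<And>i. i \<le> d P \<Longrightarrow> edge d P i \<notin> r"
    and A: "A \<subseteq> M"
  shows "card A \<le> l - 1"
proof (rule card_paths[of A "pth \<circ> p" l P])
  show "finite A" by (rule finite_subset[OF A], rule finite_subset[OF Mk]) simp
  show "inj_on (pth \<circ> p) A"
  proof (rule inj_onI)
    fix a b assume ab: "a \<in> A" "b \<in> A" "(pth \<circ> p) a = (pth \<circ> p) b"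
    have aM: "a \<in> M" and bM: "b \<in> M" using ab A by auto
    obtain qa ja where a: "p a = Inner qa ja" "istop I p qa ja a"
      using mover_stall[OF st noN P aM] by blast
    obtain qb jb where b: "p b = Inner qb jb" "istop I p qb jb b"
      using mover_stall[OF st noN P bM] by blast
    have "qa = qb" using ab(3) a b by simp
    then show "a = b" using top_uniq[of a b qa ja jb] a b aM bM by simp
  qed
  show "(pth \<circ> p) ` A \<subseteq> {..<l} - {P}"
  proof
    fix x assume "x \<in> (pth \<circ> p) ` A"
    then obtain a where a: "a \<in> A" "x = pth (p a)" by auto
    have aM: "a \<in> M" using a A by auto
    obtain q j where "p a = Inner q j" "q \<noteq> P" using mover_stall[OF st noN P aM] by blast
    moreover have "q < l" using pI[of a q j] calculation A a Mk by auto
    ultimately show "x \<in> {..<l} - {P}" using a by simp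
  qed
  show "P < l" by fact
qed

end

context rnd begin

lemma potH_Inner: "p0 a = Inner q j \<Longrightarrow> potH I0 p0 a = (if mpath I0 p0 q then (if \<exists>b\<in>Mv I0 p0. \<exists>j'. p0 b = Inner q j' \<and> j' < j then j + 1 else 2 * DD + 3 + j)
                    else (if isdesc I0 p0 q j a then DD + 1 + (d q - j) else 2 * DD + 3 + j))"
  unfolding potH_def by simp
lemma potH_South: "p0 a = South \<Longrightarrow> potH I0 p0 a = DD + 1"
  unfolding potH_def by simp
lemma potH_North: "p0 a = North \<Longrightarrow> potH I0 p0 a = 2 * DD + 2"
  unfolding potH_def by simp

lemma cls_p: "Ns p \<noteq> {} \<Longrightarrow> a \<le> k \<Longrightarrow> a \<notin> M \<Longrightarrow> b \<in> M \<Longrightarrow> p a \<noteq> p b"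
  using mono[of a b] M_cls[of b a] Mk by auto

context
  assumes NE: "Ns p \<noteq> {}" and HM: "Mv I p' = M"
    and MO: "\<forall>a\<le>k. \<forall>b\<le>k. p' a = p' b \<longrightarrow> (a \<in> I \<longleftrightarrow> b \<in> I)"
    and MS: "\<forall>a\<in>M. p' a = p a"
begin

lemma cls_p': "a \<le> k \<Longrightarrow> a \<notin> M \<Longrightarrow> b \<in> M \<Longrightarrow> p' a \<noteq> p' b"
  using MO M_cls[OF NE, of b a] Mk by blast

lemma mpath_same: "mpath I p' q = mpath I p q"
  unfolding mpath_def HM using MS by simp

lemma below_same: "(\<exists>b\<in>Mv I p'. \<exists>j'. p' b = Inner q j' \<and> j' < x) = (\<exists>b\<in>M. \<exists>j'. p b = Inner q j' \<and> j' < x)"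
  unfolding HM using MS by simp

lemma desc_after:
  assumes a: "a \<le> k" "a \<notin> M" "p a = Inner q j" "isdesc I p q j a" "\<not> mpath I p q"
    "p' a = Inner q j''" "j \<le> j''"
  shows "isdesc I p' q j'' a"
  unfolding isdesc_def HM
proof (intro allI impI)
  fix b jb' assume b: "b \<le> k" "b \<notin> M" "p' b = Inner q jb'"
  have c: "(\<exists>jb. p b = Inner q jb) \<or> (p b = South \<and> b \<notin> M \<and> q \<in> MPf I p r) \<or>
     (p b = North \<and> b \<notin> M \<and> q \<in> EPf I p r)"
    using origin[OF b(3)] b(2) by blast
  have "\<not> q \<in> MPf I p r" using MPf_m a(5) by blast
  moreover have "\<not> q \<in> EPf I p r" using EPf_e a(1,3) by blast
  ultimately obtain jb where jb: "p b = Inner q jb" using c by blast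
  show "jb' < j'' \<or> jb' = j'' \<and> a \<le> b"
  proof (cases "b = a")
    case True then show ?thesis using a(6) b(3) by simp
  next
    case False
    have c: "jb < j \<or> jb = j \<and> a \<le> b" using desc_cmp[OF a(4) b(1,2) jb] .
    have nt: "\<not> isdesc I p q jb b" using desc_uniq[OF a(1,2) b(1,2) a(3) jb a(4)] False by blast
    have "jb' \<le> jb"
      using hup_move[OF b(2) jb disjI2[OF nt]]
    proof (elim disjE conjE)
      assume "p' b = Inner q jb" then show ?thesis using b(3) by simp
    next
      assume "p' b = upn q jb"
      then have "upn q jb = Inner q jb'" using b(3) by simp
      then show ?thesis using upn_Inner by fastforce
    qed
    then show ?thesis using c a(7) by auto
  qed
qed

lemma potH_mono:
  assumes ak: "a \<le> k" and aH: "a \<notin> M"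
  shows "potH I p' a \<le> potH I p a \<and> (p' a \<noteq> p a \<longrightarrow> potH I p' a < potH I p a)"
proof (cases "p a")
  case North
  have pa: "potH I p a = 2 * DD + 2" using potH_North[of p a I] North by simp
  show ?thesis
  proof (cases "a \<noteq> anc p \<and> a = NHmin I p \<and> EPf I p r \<noteq> {}")
    case True
    define q0 where "q0 = Min (EPf I p r)"
    have q0: "q0 \<in> EPf I p r" unfolding q0_def using True Min_EPf by blast
    have ql: "q0 < l" using EPf_l[OF q0] .
    have mva: "p' a = Inner q0 0" unfolding q0_def by (subst mv_HN[OF aH North]) (rule if_P[OF True])
    have nm: "\<not> mpath I p q0"
    proof
      assume "mpath I p q0"
      then obtain b j where "b \<in> M" "p b = Inner q0 j" unfolding mpath_def by blast
      then show False using EPf_e[OF q0, of b j] Mk by auto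
    qed
    have "isdesc I p' q0 0 a"
      unfolding isdesc_def HM
    proof (intro allI impI)
      fix b jb' assume b: "b \<le> k" "b \<notin> M" "p' b = Inner q0 jb'"
      have n1: "\<not> (\<exists>jb. p b = Inner q0 jb)" using EPf_e[OF q0 b(1)] by blast
      have n2: "\<not> q0 \<in> MPf I p r" using MPf_m nm by blast
      have "b = NHmin I p" using origin[OF b(3)] n1 n2 b(2) by blast
      then have "b = a" using True by simp
      then show "jb' < 0 \<or> jb' = 0 \<and> a \<le> b" using b(3) mva by simp
    qed
    then have "potH I p' a = DD + 1 + (d q0 - 0)" using potH_Inner[of "p'" a q0 0 I, OF mva] nm mpath_same by simp
    also have "\<dots> < 2 * DD + 2" using d_le_DD[OF ql] by simp
    finally show ?thesis using pa by simp
  next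
    case F2: False
    have "p' a = North" by (subst mv_HN[OF aH North]) (rule if_not_P[OF F2])
    then show ?thesis using North potH_North[of p a I] potH_North[of "p'" a I] by simp
  qed
next
  case South
  have pa: "potH I p a = DD + 1" using potH_South[of p a I] South by simp
  show ?thesis
  proof (cases "MPf I p r \<noteq> {}")
    case True
    define q0 where "q0 = Min (MPf I p r)"
    have q0: "q0 \<in> MPf I p r" unfolding q0_def using True Min_MPf by blast
    have ql: "q0 < l" and mp: "mpath I p q0" using MPf_m[OF q0] by auto
    have mva: "p' a = Inner q0 (d q0 - 1)" unfolding q0_def ent_def[symmetric]
      by (subst mv_HS[OF aH South]) (rule if_P[OF True])
    obtain b jb where b: "b \<in> M" "p b = Inner q0 jb" using mp unfolding mpath_def by blast
    have jb: "jb < d q0" using pI[of b q0 jb] b Mk by auto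
    have "p' b \<noteq> p' a" using cls_p'[OF ak aH b(1)] by simp
    then have "jb \<noteq> d q0 - 1" using MS b mva by auto
    then have lt: "jb < d q0 - 1" using jb by simp
    have "\<exists>b\<in>Mv I p'. \<exists>j'. p' b = Inner q0 j' \<and> j' < d q0 - 1"
      unfolding below_same using b lt by blast
    then have "potH I p' a = d q0 - 1 + 1" using potH_Inner[of "p'" a q0 "d q0 - 1" I, OF mva] mp mpath_same by simp
    also have "\<dots> \<le> DD" using d_le_DD[OF ql] dq_pos[OF ql] by simp
    finally show ?thesis using pa by simp
  next
    case F2: False
    have "p' a = South" by (subst mv_HS[OF aH South]) (rule if_not_P[OF F2])
    then show ?thesis using South potH_South[of p a I] potH_South[of "p'" a I] by simp
  qed
next
  case (Inner q j)
  have qj: "q < l" "j < d q" using pI[of a q j] Inner ak by auto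
  have dq: "d q \<le> DD" using d_le_DD[OF qj(1)] .
  show ?thesis
  proof (cases "mpath I p q")
    case mp: True
    have mp': "mpath I p' q" using mp mpath_same by simp
    show ?thesis
      using hup_move[OF aH Inner disjI1[OF mp]]
    proof (elim disjE conjE)
      assume s: "p' a = Inner q j"
      show ?thesis using potH_Inner[of "p'" a q j I, OF s] potH_Inner[of p a q j I, OF Inner] mp mp' below_same s Inner by simp
    next
      assume u: "p' a = upn q j"
      show ?thesis
      proof (cases "j = 0")
        case True
        then have "p' a = North" using u unfolding upn_def by simp
        then have "potH I p' a = 2 * DD + 2" using potH_North by simp
        moreover have "potH I p a = 2 * DD + 3 + j" using potH_Inner[of p a q j I, OF Inner] mp True by simp
        ultimately show ?thesis by simp
      next
        case False
        then have u': "p' a = Inner q (j - 1)" using u unfolding upn_def by simp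
        show ?thesis
        proof (cases "\<exists>b\<in>M. \<exists>j'. p b = Inner q j' \<and> j' < j")
          case True
          then obtain b jb where b: "b \<in> M" "p b = Inner q jb" "jb < j" by blast
          have "p' b \<noteq> p' a" using cls_p'[OF ak aH b(1)] by simp
          then have "jb \<noteq> j - 1" using MS b(1,2) u' by auto
          then have "jb < j - 1" using b(3) by simp
          then have "\<exists>b\<in>Mv I p'. \<exists>j'. p' b = Inner q j' \<and> j' < j - 1" unfolding below_same using b by blast
          then have "potH I p' a = j" using potH_Inner[of "p'" a q "j - 1" I, OF u'] mp' False by simp
          moreover have "potH I p a = j + 1" using potH_Inner[of p a q j I, OF Inner] mp True by simp
          ultimately show ?thesis by simp
        next
          case nb: False
          have "potH I p' a \<le> 2 * DD + 3 + (j - 1)" using potH_Inner[of "p'" a q "j - 1" I, OF u'] mp' by simp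
          moreover have "potH I p a = 2 * DD + 3 + j" using potH_Inner[of p a q j I, OF Inner] mp nb by simp
          ultimately show ?thesis using False by simp
        qed
      qed
    qed
  next
    case nmp: False
    have nmp': "\<not> mpath I p' q" using nmp mpath_same by simp
    show ?thesis
    proof (cases "isdesc I p q j a")
      case ds: True
      have pa: "potH I p a = DD + 1 + (d q - j)" using potH_Inner[of p a q j I, OF Inner] nmp ds by simp
      show ?thesis
        using hdown_move[OF aH Inner nmp ds]
      proof (elim disjE conjE)
        assume s: "p' a = Inner q j"
        have "isdesc I p' q j a" using desc_after[OF ak aH Inner ds nmp s] by simp
        then show ?thesis using potH_Inner[of "p'" a q j I, OF s] nmp' pa s Inner by simp
      next
        assume dn: "p' a = downn q j"
        show ?thesis
        proof (cases "Suc j < d q")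
          case True
          then have dn': "p' a = Inner q (Suc j)" using dn unfolding downn_def by simp
          have "isdesc I p' q (Suc j) a" using desc_after[OF ak aH Inner ds nmp dn'] by simp
          then have "potH I p' a = DD + 1 + (d q - Suc j)" using potH_Inner[of "p'" a q "Suc j" I, OF dn'] nmp' by simp
          then show ?thesis using pa True by (simp add: diff_less_mono2)
        next
          case False
          then have "p' a = South" using dn unfolding downn_def by simp
          then have "potH I p' a = DD + 1" using potH_South by simp
          then show ?thesis using pa qj by (simp add: less_diff_conv)
        qed
      qed
    next
      case nds: False
      have pa: "potH I p a = 2 * DD + 3 + j" using potH_Inner[of p a q j I, OF Inner] nmp nds by simp
      show ?thesis
        using hup_move[OF aH Inner disjI2[OF nds]]
      proof (elim disjE conjE)
        assume s: "p' a = Inner q j"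
        have "potH I p' a \<le> 2 * DD + 3 + j" using potH_Inner[of "p'" a q j I, OF s] nmp' dq by (simp split: if_split_asm)
        then show ?thesis using pa s Inner by simp
      next
        assume u: "p' a = upn q j"
        show ?thesis
        proof (cases "j = 0")
          case True
          then have "p' a = North" using u unfolding upn_def by simp
          then have "potH I p' a = 2 * DD + 2" using potH_North by simp
          then show ?thesis using pa by simp
        next
          case False
          then have u': "p' a = Inner q (j - 1)" using u unfolding upn_def by simp
          have "potH I p' a < 2 * DD + 3 + j" using potH_Inner[of "p'" a q "j - 1" I, OF u'] nmp' dq False by (simp split: if_split_asm)
          then show ?thesis using pa by simp
        qed
      qed
    qed
  qed
qed

end
end

context rnd begin

context
  assumes NE: "Ns p \<noteq> {}" and HM: "Mv I p' = M"
    and MO: "\<forall>a\<le>k. \<forall>b\<le>k. p' a = p' b \<longrightarrow> (a \<in> I \<longleftrightarrow> b \<in> I)"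
    and MS: "\<forall>a\<in>M. p' a = p a"
    and HS: "\<forall>a. a \<le> k \<longrightarrow> a \<notin> M \<longrightarrow> p' a = p a"
begin

lemma noN2: "\<forall>a\<in>M. p a \<noteq> North"
proof
  fix a assume aM: "a \<in> M"
  have "p (anc p) \<noteq> p a" using cls_p[OF NE _ anc_notM[OF NE] aM] anc_k[OF NE] by blast
  then show "p a \<noteq> North" using anc_k[OF NE] by simp
qed

lemma helper_stall_contra: False
proof -
  obtain P where P: "P < l" "\<And>i. i \<le> d P \<Longrightarrow> edge d P i \<notin> r" using intact by blast
  have ms: "\<exists>q j. p a = Inner q j \<and> q \<noteq> P \<and> istop I p q j a \<and> edge d q j \<in> r" if "a \<in> M" for a
    by (rule mover_stall[OF MS noN2 P that])
  have noMP: "\<not> mpath I p P"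
  proof
    assume "mpath I p P"
    then obtain b j where b: "b \<in> M" "p b = Inner P j" unfolding mpath_def by blast
    then show False using mover_on_P_moves[OF P b] MS by simp
  qed
  have H1: "\<exists>q j. p a = Inner q j \<and> q \<noteq> P \<and> \<not> mpath I p q \<and> isdesc I p q j a"
    if ak: "a \<le> k" and aH: "a \<notin> M" and an: "a \<noteq> anc p" for a
  proof (cases "p a")
    case North
    let ?S = "{b. b \<le> k \<and> b \<notin> M \<and> p b = North \<and> b \<noteq> anc p}"
    have aS: "a \<in> ?S" using ak aH an North by simp
    have finS: "finite ?S" by (rule finite_subset[of _ "{..k}"]) auto
    have hS: "NHmin I p \<in> ?S" unfolding NHmin_def using finS aS by (metis (no_types, lifting) Min_in empty_iff)
    have emptyP: "\<forall>b\<le>k. \<forall>j. p b \<noteq> Inner P j"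
    proof (intro allI impI)
      fix b j assume bk: "b \<le> k"
      show "p b \<noteq> Inner P j"
      proof
        assume pb: "p b = Inner P j"
        have j: "j < d P" using pI[OF bk pb] by simp
        show False
        proof (cases "b \<in> M")
          case True then show False using noMP mpathI pb by blast
        next
          case bH: False
          have sb: "p' b = Inner P j" using HS bk bH pb by simp
          show False
          proof (cases "isdesc I p P j b")
            case True
            then show False using hdown_move[OF bH pb noMP True] sb downn_ne[of P j] P(2)[of "Suc j"] j by auto
          next
            case False
            then show False using hup_move[OF bH pb disjI2[OF False]] sb upn_ne[of P j] P(2)[of j] j by auto
          qed
        qed
      qed
    qed
    have "P \<in> EPf I p r" unfolding EPf_def using P(1) P(2)[of 0] emptyP by simp
    then have T: "NHmin I p \<noteq> anc p \<and> NHmin I p = NHmin I p \<and> EPf I p r \<noteq> {}" using hS by blast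
    have hH: "NHmin I p \<notin> M" "p (NHmin I p) = North" "NHmin I p \<le> k" using hS by auto
    have "p' (NHmin I p) = Inner (Min (EPf I p r)) 0"
      by (subst mv_HN[OF hH(1,2)]) (rule if_P[OF T])
    then have "p' (NHmin I p) \<noteq> p (NHmin I p)" using hH by simp
    then show ?thesis using HS hH by blast
  next
    case South
    obtain b where bM: "b \<in> M" using M_ne[OF NE] by blast
    obtain q jb where b: "p b = Inner q jb" "istop I p q jb b" "edge d q jb \<in> r" using ms[OF bM] by blast
    have qj: "q < l" "jb < d q" using pI[of b q jb] b bM Mk by auto
    have "edge d q (d q) \<notin> r"
    proof
      assume "edge d q (d q) \<in> r"
      then have "jb = d q" using cutu[OF qj(1) _ _ b(3)] qj by simp
      then show False using qj by simp
    qed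
    then have "q \<in> MPf I p r" unfolding MPf_def using qj mpathI[OF bM b(1)] by simp
    then have T: "MPf I p r \<noteq> {}" by blast
    have "p' a = ent (Min (MPf I p r))" by (subst mv_HS[OF aH South]) (rule if_P[OF T])
    then have "p' a \<noteq> p a" using South unfolding ent_def by simp
    then show ?thesis using HS ak aH by blast
  next
    case (Inner q j)
    have qj: "q < l" "j < d q" using pI[OF ak Inner] by auto
    have sa: "p' a = Inner q j" using HS ak aH Inner by simp
    show ?thesis
    proof (cases "mpath I p q")
      case True
      have e1: "edge d q j \<in> r" using hup_move[OF aH Inner disjI1[OF True]] sa upn_ne[of q j] by auto
      obtain b0 j0 where b0: "b0 \<in> M" "p b0 = Inner q j0" using True unfolding mpath_def by blast
      obtain b jb where b: "b \<in> M" "p b = Inner q jb" "istop I p q jb b" using top_ex[OF b0] by blast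
      obtain q2 j2 where b2: "p b = Inner q2 j2" "edge d q2 j2 \<in> r" using ms[OF b(1)] by blast
      have "q2 = q" "j2 = jb" using b2(1) b(2) by auto
      then have e2: "edge d q jb \<in> r" using b2 by simp
      have jb: "jb < d q" using pI[of b q jb] b Mk by auto
      have "j = jb" using cutu[OF qj(1) _ _ e1 e2] qj jb by simp
      then have "p a = p b" using Inner b(2) by simp
      then show ?thesis using cls_p[OF NE ak aH b(1)] by simp
    next
      case nmp: False
      show ?thesis
      proof (cases "isdesc I p q j a")
        case True
        have "edge d q (Suc j) \<in> r" using hdown_move[OF aH Inner nmp True] sa downn_ne[of q j] by auto
        then have "q \<noteq> P" using P(2)[of "Suc j"] qj by auto
        then show ?thesis using Inner nmp True by blast
      next
        case nds: False
        have e1: "edge d q j \<in> r" using hup_move[OF aH Inner disjI2[OF nds]] sa upn_ne[of q j] by auto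
        obtain c where c: "c \<le> k" "c \<notin> M" and cj: "\<exists>jc. p c = Inner q jc \<and> isdesc I p q jc c"
          using desc_ex[OF ak aH Inner] by blast
        then obtain jc where cj: "p c = Inner q jc" "isdesc I p q jc c" by blast
        have jc: "jc < d q" using pI[OF c(1) cj(1)] by simp
        have sc: "p' c = Inner q jc" using HS c cj by simp
        have e2: "edge d q (Suc jc) \<in> r" using hdown_move[OF c(2) cj(1) nmp cj(2)] sc downn_ne[of q jc] by auto
        have "j \<le> jc" using desc_cmp[OF cj(2) ak aH Inner] by auto
        moreover have "j = Suc jc" using cutu[OF qj(1) _ _ e1 e2] qj jc by simp
        ultimately show ?thesis by simp
      qed
    qed
  qed
  define A where "A = {..k} - {anc p}"
  have cardA: "card A = k" unfolding A_def using anc_k[OF NE] by simp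
  have "card A \<le> l - 1"
  proof (rule card_paths[of A "pth \<circ> p" l P])
    show "finite A" unfolding A_def by simp
    show "inj_on (pth \<circ> p) A"
    proof (rule inj_onI)
      fix a b assume ab: "a \<in> A" "b \<in> A" "(pth \<circ> p) a = (pth \<circ> p) b"
      have ak: "a \<le> k" "a \<noteq> anc p" and bk: "b \<le> k" "b \<noteq> anc p" using ab(1,2) unfolding A_def by auto
      show "a = b"
      proof (cases "a \<in> M")
        case aM: True
        obtain qa ja where a: "p a = Inner qa ja" "istop I p qa ja a" using ms[OF aM] by blast
        show ?thesis
        proof (cases "b \<in> M")
          case bM: True
          obtain qb jb where b: "p b = Inner qb jb" "istop I p qb jb b" using ms[OF bM] by blast
          have "qa = qb" using ab(3) a b by simp
          then show ?thesis using top_uniq[OF aM bM a(1)] a b by simp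
        next
          case bH: False
          obtain qb jb where b: "p b = Inner qb jb" "\<not> mpath I p qb" using H1[OF bk(1) bH bk(2)] by blast
          have "qa = qb" using ab(3) a b by simp
          then show ?thesis using b(2) mpathI[OF aM a(1)] by simp
        qed
      next
        case aH: False
        obtain qa ja where a: "p a = Inner qa ja" "\<not> mpath I p qa" "isdesc I p qa ja a"
          using H1[OF ak(1) aH ak(2)] by blast
        show ?thesis
        proof (cases "b \<in> M")
          case bM: True
          obtain qb jb where b: "p b = Inner qb jb" using ms[OF bM] by blast
          have "qa = qb" using ab(3) a b by simp
          then show ?thesis using a(2) mpathI[OF bM b(1)] by simp
        next
          case bH: False
          obtain qb jb where b: "p b = Inner qb jb" "isdesc I p qb jb b" using H1[OF bk(1) bH bk(2)] by blast
          have "qa = qb" using ab(3) a b by simp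
          then show ?thesis using desc_uniq[OF ak(1) aH bk(1) bH a(1)] a b by simp
        qed
      qed
    qed
    show "(pth \<circ> p) ` A \<subseteq> {..<l} - {P}"
    proof
      fix x assume "x \<in> (pth \<circ> p) ` A"
      then obtain a where a: "a \<in> A" "x = pth (p a)" by auto
      have ak: "a \<le> k" "a \<noteq> anc p" using a(1) unfolding A_def by auto
      obtain q j where qj: "p a = Inner q j" "q \<noteq> P"
      proof (cases "a \<in> M")
        case True then show ?thesis using ms[OF True] that by blast
      next
        case False then show ?thesis using H1[OF ak(1) False ak(2)] that by blast
      qed
      have "q < l" using pI[OF ak(1) qj(1)] by simp
      then show "x \<in> {..<l} - {P}" using a qj by simp
    qed
    show "P < l" by fact
  qed
  then show False using cardA kl P by simp
qed

end
end

context th begin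
lemma anc_in_gen: "Ns p0 \<noteq> {} \<Longrightarrow> anc p0 \<in> Ns p0"
  unfolding anc_def by (rule Min_in) (auto simp: Ns_def)

abbreviation LEX :: "((nat \<times> nat \<times> nat \<times> nat) \<times> (nat \<times> nat \<times> nat \<times> nat)) set" where
  "LEX \<equiv> less_than <*lex*> less_than <*lex*> less_than <*lex*> less_than"
end

context rnd begin

lemma decrease: "(mu (step (p, I) r), mu (p, I)) \<in> LEX"
proof -
  define I' where "I' = I \<union> {a. a \<le> k \<and> (\<exists>b\<in>I. b \<le> k \<and> p' a = p' b)}"
  have st: "step (p, I) r = (p', I')" unfolding step_def I'_def Let_def by simp
  have iv': "inv (p', I')" using inv_step[OF iv, of r] st by simp
  have I'k: "I' \<subseteq> {..k}" using Ik unfolding I'_def by auto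
  have II': "I \<subseteq> I'" unfolding I'_def by auto
  show ?thesis
  proof (cases "I' = I")
    case False
    then obtain a where a: "a \<in> I'" "a \<notin> I" using II' by auto
    have "{..k} - I' \<subset> {..k} - I" using a I'k II' by auto
    then have "card ({..k} - I') < card ({..k} - I)" by (rule psubset_card_mono[rotated]) simp
    then show ?thesis unfolding st mu_def by simp
  next
    case True
    have ivs': "(\<forall>a\<le>k. p' a \<in> theta_V l d) \<and> I' \<subseteq> {..k} \<and> I' \<noteq> {}
     \<and> (\<forall>a\<le>k. \<forall>b\<le>k. p' a = p' b \<longrightarrow> (a \<in> I' \<longleftrightarrow> b \<in> I'))"
      using iv' unfolding inv_def fst_conv snd_conv .
    have MO': "\<forall>a\<le>k. \<forall>b\<le>k. p' a = p' b \<longrightarrow> (a \<in> I' \<longleftrightarrow> b \<in> I')" using ivs' by blast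
    have MO: "\<forall>a\<le>k. \<forall>b\<le>k. p' a = p' b \<longrightarrow> (a \<in> I \<longleftrightarrow> b \<in> I)"
      using MO' unfolding True .
    have fM: "finite M" by (rule finite_subset[OF Mk]) simp
    show ?thesis
    proof (cases "Ns p = {}")
      case Nemp: True
      have Mall: "M = {..k}" unfolding Mv_def using Nemp by simp
      show ?thesis
      proof (cases "Ns p' = {}")
        case False
        then show ?thesis unfolding st mu_def using True Nemp by simp
      next
        case Nemp': True
        have HM: "Mv I p' = M" unfolding Mv_def using Nemp Nemp' by simp
        have NN: "\<forall>a\<in>M. p a \<noteq> North \<longrightarrow> p' a \<noteq> North"
          using Nemp' Mall unfolding Ns_def by auto
        show ?thesis
        proof (cases "\<exists>a\<in>M. p' a \<noteq> p a")
          case True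
          have "(\<Sum>a\<in>M. potM I p' a) < (\<Sum>a\<in>M. potM I p a)"
            by (rule sum_strict_mono_ex1[OF fM]) (use potM_mono[OF HM NN] True in auto)
          then show ?thesis unfolding st mu_def using \<open>I' = I\<close> Nemp Nemp' HM by simp
        next
          case False
          then have MS: "\<forall>a\<in>M. p' a = p a" by auto
          have noN: "\<forall>a\<in>M. p a \<noteq> North" using Nemp Mall unfolding Ns_def by auto
          obtain P where P: "P < l" "\<And>i. i \<le> d P \<Longrightarrow> edge d P i \<notin> r" using intact by blast
          have "card M \<le> l - 1" using mover_count_contra[OF MS noN P, of M] by blast
          then show ?thesis using Mall kl by simp
        qed
      qed
    next
      case NE: False
      have ak: "anc p \<le> k" "p (anc p) = North" using anc_k[OF NE] by auto
      have aH: "anc p \<notin> M" using anc_notM[OF NE] .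
      have "p' (anc p) = North" by (subst mv_HN[OF aH ak(2)]) simp
      then have NE': "Ns p' \<noteq> {}" unfolding Ns_def using ak by blast
      have a'N: "anc p' \<in> Ns p'" using anc_in_gen[OF NE'] .
      then have "anc p' \<le> k" "p' (anc p') = North" unfolding Ns_def by auto
      then have "anc p' \<in> I \<longleftrightarrow> anc p \<in> I" using MO ak \<open>p' (anc p) = North\<close> by metis
      then have HM: "Mv I p' = M" unfolding Mv_def using NE NE' by simp
      have NN: "\<forall>a\<in>M. p a \<noteq> North \<longrightarrow> p' a \<noteq> North"
      proof (intro ballI impI)
        fix a assume aM: "a \<in> M" and "p a \<noteq> North"
        have c: "a \<in> I \<longleftrightarrow> anc p \<notin> I" using M_cls[OF NE aM ak(1) aH] .
        show "p' a \<noteq> North"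
        proof
          assume "p' a = North"
          then have "p' a = p' (anc p)" using \<open>p' (anc p) = North\<close> by simp
          then have "a \<in> I \<longleftrightarrow> anc p \<in> I" using MO ak(1) aM Mk by blast
          then show False using c by blast
        qed
      qed
      have flag: "(if Ns p' = {} then 1 else 0 :: nat) = (if Ns p = {} then 1 else 0)" using NE NE' by simp
      have le: "(\<Sum>a\<in>M. potM I p' a) \<le> (\<Sum>a\<in>M. potM I p a)"
        by (rule sum_mono) (use potM_mono[OF HM NN] in auto)
      show ?thesis
      proof (cases "\<exists>a\<in>M. p' a \<noteq> p a")
        case True
        have "(\<Sum>a\<in>M. potM I p' a) < (\<Sum>a\<in>M. potM I p a)"
          by (rule sum_strict_mono_ex1[OF fM]) (use potM_mono[OF HM NN] True in auto)
        then show ?thesis unfolding st mu_def using \<open>I' = I\<close> flag HM by simp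
      next
        case False
        then have MS: "\<forall>a\<in>M. p' a = p a" by auto
        have fH: "finite ({..k} - M)" by simp
        show ?thesis
        proof (cases "\<exists>a\<in>{..k} - M. p' a \<noteq> p a")
          case True
          have "(\<Sum>a\<in>{..k} - M. potH I p' a) < (\<Sum>a\<in>{..k} - M. potH I p a)"
            by (rule sum_strict_mono_ex1[OF fH]) (use potH_mono[OF NE HM MO MS] True in auto)
          then show ?thesis unfolding st mu_def using \<open>I' = I\<close> flag HM le by auto
        next
          case False
          then have HS: "\<forall>a. a \<le> k \<longrightarrow> a \<notin> M \<longrightarrow> p' a = p a" by auto
          show ?thesis using helper_stall_contra[OF NE HM MO MS HS] by simp
        qed
      qed
    qed
  qed
qed

end

context th begin

definition sigma :: "tnode strategy" where
  "sigma p0 s Rs = (if Rs = [] then p0 else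
     (let st = foldl step (p0, {s}) (butlast Rs) in mv (snd st) (fst st) (last Rs)))"

lemma run_eq: "bc_run k sigma p0 s R t = foldl step (p0, {s}) (map R [0..<t])"
proof (induction t)
  case 0 then show ?case by simp
next
  case (Suc t)
  obtain p I where pI: "bc_run k sigma p0 s R t = (p, I)" by (cases "bc_run k sigma p0 s R t")
  have m: "map R [0..<Suc t] = map R [0..<t] @ [R t]" by simp
  have fe: "foldl step (p0, {s}) (map R [0..<t]) = (p, I)" using Suc pI by simp
  have sg: "sigma p0 s (map R [0..<Suc t]) = mv I p (R t)"
    unfolding sigma_def m by (simp add: Let_def fe)
  have "bc_run k sigma p0 s R (Suc t) = step (p, I) (R t)"
    using pI sg by (simp add: step_def Let_def)
  also have "\<dots> = foldl step (p0, {s}) (map R [0..<Suc t])"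
    unfolding m using Suc pI by simp
  finally show ?case .
qed

lemma run_Suc: "bc_run k sigma p0 s R (Suc t) = step (bc_run k sigma p0 s R t) (R t)"
  unfolding run_eq by simp

lemma step_fst: "fst (step st r) = mv (snd st) (fst st) r"
  unfolding step_def Let_def by simp

lemma solvable: "broadcast_solvable (theta_V l d) (theta_E l d) k"
  unfolding broadcast_solvable_def
proof (rule exI[of _ sigma], intro allI impI, rule conjI)
  fix p0 :: "nat \<Rightarrow> tnode" and s :: nat and R :: "nat \<Rightarrow> tnode set set"
  assume as: "inj_on p0 {..k} \<and> p0 ` {..k} \<subseteq> theta_V l d \<and> s \<le> k \<and>
         (\<forall>t. R t \<subseteq> theta_E l d \<and> graph_connected (theta_V l d) (theta_E l d - R t))"
  let ?run = "bc_run k sigma p0 s R"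
  have inv0: "inv (p0, {s})" unfolding inv_def
  proof (simp, intro conjI allI impI)
    fix a assume "a \<le> k" then show "p0 a \<in> theta_V l d" using as by auto
  next
    show "s \<le> k" using as by simp
  next
    fix a b assume "a \<le> k" "b \<le> k" "p0 a = p0 b"
    then have "a = b" using as unfolding inj_on_def by auto
    then show "(a = s) = (b = s)" by simp
  qed
  have invt: "inv (?run t)" for t
  proof (induction t)
    case 0 then show ?case using inv0 by simp
  next
    case (Suc t)
    obtain p I where pI: "?run t = (p, I)" by (cases "?run t")
    show ?case unfolding run_Suc pI using inv_step Suc pI by simp
  qed
  show "\<forall>t. \<forall>a\<le>k. let p = fst (?run t); p' = fst (?run (Suc t))
             in p' a = p a \<or> {p a, p' a} \<in> theta_E l d - R t"
  proof (intro allI impI)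
    fix t a assume ak: "a \<le> k"
    obtain p I where pI: "?run t = (p, I)" by (cases "?run t")
    have "p a \<in> theta_V l d" using invt[of t] pI ak unfolding inv_def by simp
    then have "mv I p (R t) a = p a \<or> {p a, mv I p (R t) a} \<in> theta_E l d - R t"
      using mv_legal[of p a I "R t"] by blast
    then show "let p = fst (?run t); p' = fst (?run (Suc t))
             in p' a = p a \<or> {p a, p' a} \<in> theta_E l d - R t"
      unfolding run_Suc pI step_fst Let_def by simp
  qed
  show "\<exists>t. {..k} \<subseteq> snd (?run t)"
  proof (rule ccontr)
    assume nt: "\<not> (\<exists>t. {..k} \<subseteq> snd (?run t))"
    have dec: "(mu (?run (Suc t)), mu (?run t)) \<in> LEX" for t
    proof -
      obtain p I where pI: "?run t = (p, I)" by (cases "?run t")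
      have "rnd l k d p I (R t)"
      proof
        show "inv (p, I)" using invt[of t] pI by simp
        show "goodr (R t)" unfolding goodr_def using as by blast
        show "\<not> {..k} \<subseteq> I" using nt pI by (metis snd_conv)
      qed
      then have "(mu (step (p, I) (R t)), mu (p, I)) \<in> LEX" by (rule rnd.decrease)
      then show ?thesis unfolding run_Suc pI .
    qed
    have "wf LEX" by (intro wf_lex_prod wf_less_than)
    then have "\<not> (\<exists>f. \<forall>i. (f (Suc i), f i) \<in> LEX)" unfolding wf_iff_no_infinite_down_chain .
    moreover have "\<exists>f. \<forall>i. (f (Suc i), f i) \<in> LEX"
      by (rule exI[of _ "\<lambda>t. mu (?run t)"]) (use dec in simp)
    ultimately show False by blast
  qed
qed

end

theorem theorem1:
  fixes l k :: nat and d :: "nat \<Rightarrow> nat"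
  assumes "l \<ge> 1"
    and "\<forall>i<l. d i \<ge> 1"
    and "k \<ge> l"
    and "k + 1 \<le> card (theta_V l d)"
  shows "broadcast_solvable (theta_V l d) (theta_E l d) k"
proof -
  interpret th l k d using assms by unfold_locales auto
  show ?thesis by (rule solvable)
qed

end
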